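(* Let $\mathcal{G}_0$ be a real semisimple Lie algebra with Cartan decomposition $\mathcal{G}_0=\mathcal{T}_0+\mathcal{P}_0$, let $\mathcal{G}$ be its complexification and $\mathcal{G}_k=\mathcal{T}_0+i\mathcal{P}_0$ the associated compact real form of $\mathcal{G}$. Let $S$ be a finite abelian semigroup such that the expanded algebra $\mathcal{G}_{k,S}=S\otimes\mathcal{G}_k$ is compact (i.e. all eigenvalues $\xi_\alpha$ of the matrix $\mathbf{g}^S$ are positive). Then $\mathcal{G}_{0,S}=S\otimes\mathcal{G}_0=\mathcal{T}_{0,S}+\mathcal{P}_{0,S}$, with $\mathcal{T}_{0,S}=S\otimes\mathcal{T}_0=\mathrm{span}\{\lambda_\alpha\otimes X:X\in\mathcal{T}_0\}$ and $\mathcal{P}_{0,S}=S\otimes\mathcal{P}_0$, is a Cartan decomposition of the real Lie algebra $\mathcal{G}_{0,S}$.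
   Context: For a (real or complex) Lie algebra $\mathcal{L}$ with basis $\{X_i\}$, $[X_i,X_j]=C_{ij}^kX_k$, and a finite abelian semigroup $S=\{\lambda_\alpha\}$ with 2-selector $K_{\alpha\beta}^\gamma$ ($=1$ if $\lambda_\alpha\lambda_\beta=\lambda_\gamma$, else $0$), the $S$-expanded algebra $S\otimes\mathcal{L}$ has basis $\lambda_\alpha\otimes X_i$ (over the same field) and bracket $[\lambda_\alpha\otimes X_i,\lambda_\beta\otimes X_j]=K_{\alpha\beta}^\gamma C_{ij}^k\,\lambda_\gamma\otimes X_k$; $S\otimes\mathcal{G}$ is the complexification of $S\otimes\mathcal{G}_0$. The matrix $\mathbf{g}^S$ has entries $g^S_{\alpha\beta}=K_{\alpha\gamma}^\lambda K_{\beta\lambda}^\gamma$. A real semisimple Lie algebra is compact if its Killing form is negative definite. Cartan decomposition: if $\mathcal{L}_0$ is a real semisimple Lie algebra with complexification $\mathcal{L}$ and $\sigma$ the conjugation of $\mathcal{L}$ with respect to $\mathcal{L}_0$, a decomposition $\mathcal{L}_0=\mathcal{T}+\mathcal{P}$ with $\mathcal{T}$ a subalgebra is a Cartan decomposition if there exists a compact real form $\mathcal{L}_k$ of $\mathcal{L}$ with $\sigma(\mathcal{L}_k)\subset\mathcal{L}_k$, $\mathcal{T}=\mathcal{L}_0\cap\mathcal{L}_k$ and $\mathcal{P}=\mathcal{L}_0\cap(i\mathcal{L}_k)$. *)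

theory Defs
  imports "HOL-Analysis.Analysis"
begin

text \<open>A (real or complex) Lie algebra with basis indexed by the finite type 'i is
  represented by its coordinate space 'a^'i and structure constants C, with
  [X_i, X_j] = C i j k X_k (summation over k).\<close>

definition br :: "('i::finite \<Rightarrow> 'i \<Rightarrow> 'i \<Rightarrow> 'a::comm_ring_1) \<Rightarrow> 'a^'i \<Rightarrow> 'a^'i \<Rightarrow> 'a^'i" where
  "br C x y = (\<chi> k. \<Sum>i\<in>UNIV. \<Sum>j\<in>UNIV. x$i * y$j * C i j k)"

definition lie_constants :: "('i::finite \<Rightarrow> 'i \<Rightarrow> 'i \<Rightarrow> real) \<Rightarrow> bool" where
  "lie_constants C \<longleftrightarrow>
     (\<forall>i j k. C i j k = - C j i k) \<and>
     (\<forall>i j k m. (\<Sum>l\<in>UNIV. C i j l * C l k m + C j k l * C l i m + C k i l * C l j m) = 0)"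

text \<open>Complexification: complex structure constants are the real ones.\<close>
definition cC :: "('i \<Rightarrow> 'i \<Rightarrow> 'i \<Rightarrow> real) \<Rightarrow> 'i \<Rightarrow> 'i \<Rightarrow> 'i \<Rightarrow> complex" where
  "cC C i j k = complex_of_real (C i j k)"

definition emb :: "real^'i::finite \<Rightarrow> complex^'i" where
  "emb x = (\<chi> k. complex_of_real (x$k))"

definition conjv :: "complex^'i::finite \<Rightarrow> complex^'i" where
  "conjv z = (\<chi> k. cnj (z$k))"

definition imul :: "complex^'i::finite \<Rightarrow> complex^'i" where
  "imul z = (\<chi> k. \<i> * z$k)"

text \<open>A real Lie algebra is given as a real subspace V of a real vector space with a bracket b.\<close>

definition real_trace :: "'v::real_vector set \<Rightarrow> ('v \<Rightarrow> 'v) \<Rightarrow> real" where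
  "real_trace V f =
     (let B = (SOME B. B \<subseteq> V \<and> \<not> dependent B \<and> span B = V)
      in \<Sum>b\<in>B. representation B (f b) b)"

definition killing :: "'v::real_vector set \<Rightarrow> ('v \<Rightarrow> 'v \<Rightarrow> 'v) \<Rightarrow> 'v \<Rightarrow> 'v \<Rightarrow> real" where
  "killing V b x y = real_trace V (\<lambda>z. b x (b y z))"

definition real_subalgebra :: "'v::real_vector set \<Rightarrow> ('v \<Rightarrow> 'v \<Rightarrow> 'v) \<Rightarrow> 'v set \<Rightarrow> bool" where
  "real_subalgebra V b T \<longleftrightarrow> subspace T \<and> T \<subseteq> V \<and> (\<forall>x\<in>T. \<forall>y\<in>T. b x y \<in> T)"

definition semisimple_real :: "('i::finite \<Rightarrow> 'i \<Rightarrow> 'i \<Rightarrow> real) \<Rightarrow> bool" where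
  "semisimple_real C \<longleftrightarrow>
     (\<forall>x::real^'i. (\<forall>y. killing UNIV (br C) x y = 0) \<longrightarrow> x = 0)"

definition compact_real_lie :: "'v::real_vector set \<Rightarrow> ('v \<Rightarrow> 'v \<Rightarrow> 'v) \<Rightarrow> bool" where
  "compact_real_lie V b \<longleftrightarrow> (\<forall>x\<in>V. x \<noteq> 0 \<longrightarrow> killing V b x x < 0)"

definition real_form :: "('i::finite \<Rightarrow> 'i \<Rightarrow> 'i \<Rightarrow> real) \<Rightarrow> (complex^'i) set \<Rightarrow> bool" where
  "real_form C L \<longleftrightarrow>
     real_subalgebra UNIV (br (cC C)) L \<and>
     (\<forall>z. \<exists>a\<in>L. \<exists>b\<in>L. z = a + imul b) \<and>
     (\<forall>a\<in>L. imul a \<in> L \<longrightarrow> a = 0)"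

definition compact_real_form :: "('i::finite \<Rightarrow> 'i \<Rightarrow> 'i \<Rightarrow> real) \<Rightarrow> (complex^'i) set \<Rightarrow> bool" where
  "compact_real_form C L \<longleftrightarrow> real_form C L \<and> compact_real_lie L (br (cC C))"

text \<open>Cartan decomposition of the real semisimple Lie algebra real^'i (structure constants C),
  with complexification complex^'i, real form emb ` UNIV and conjugation conjv.\<close>
definition cartan_decomposition ::
  "('i::finite \<Rightarrow> 'i \<Rightarrow> 'i \<Rightarrow> real) \<Rightarrow> (real^'i) set \<Rightarrow> (real^'i) set \<Rightarrow> bool" where
  "cartan_decomposition C T P \<longleftrightarrow>
     semisimple_real C \<and>
     real_subalgebra UNIV (br C) T \<and>
     (\<forall>x. \<exists>t\<in>T. \<exists>p\<in>P. x = t + p) \<and>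
     (\<exists>Lk. compact_real_form C Lk \<and> conjv ` Lk \<subseteq> Lk \<and>
           emb ` T = range emb \<inter> Lk \<and>
           emb ` P = range emb \<inter> imul ` Lk)"

text \<open>Semigroup S = finite abelian semigroup type 's; basis \<lambda>_\<alpha> \<otimes> X_i indexed by ('s \<times> 'i).\<close>
definition selector :: "'s::ab_semigroup_mult \<Rightarrow> 's \<Rightarrow> 's \<Rightarrow> real" where
  "selector \<alpha> \<beta> \<gamma> = (if \<alpha> * \<beta> = \<gamma> then 1 else 0)"

definition expC :: "('i \<Rightarrow> 'i \<Rightarrow> 'i \<Rightarrow> real) \<Rightarrow> ('s::ab_semigroup_mult \<times> 'i) \<Rightarrow> ('s \<times> 'i) \<Rightarrow> ('s \<times> 'i) \<Rightarrow> real" where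
  "expC C a b c = selector (fst a) (fst b) (fst c) * C (snd a) (snd b) (snd c)"

definition comp :: "'a^('s::finite \<times> 'i::finite) \<Rightarrow> 's \<Rightarrow> 'a^'i" where
  "comp x \<alpha> = (\<chi> i. x$(\<alpha>, i))"

text \<open>S \<otimes> W = span {\<lambda>_\<alpha> \<otimes> X : X \<in> W} for a subspace W.\<close>
definition sexp :: "('a^'i::finite) set \<Rightarrow> ('a^('s::finite \<times> 'i)) set" where
  "sexp W = {x. \<forall>\<alpha>. comp x \<alpha> \<in> W}"

end

theory Submission imports Defs begin

lemma some_basis:
  fixes V :: "'v::euclidean_space set"
  assumes "subspace V"
  defines "B \<equiv> SOME B. B \<subseteq> V \<and> \<not> dependent B \<and> span B = V"
  shows "B \<subseteq> V \<and> independent B \<and> span B = V \<and> finite B"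
proof -
  obtain B' where "B' \<subseteq> V" "independent B'" "V \<subseteq> span B'"
    by (metis basis_exists)
  then have "B' \<subseteq> V \<and> \<not> dependent B' \<and> span B' = V"
    using assms(1) by (metis span_minimal subset_antisym)
  then have "B \<subseteq> V \<and> \<not> dependent B \<and> span B = V"
    unfolding B_def by (rule someI)
  then show ?thesis using independent_bound by blast
qed

lemma trace_two_bases:
  fixes V :: "'v::euclidean_space set"
  assumes B1: "B1 \<subseteq> V" "independent B1" "span B1 = V"
    and B2: "B2 \<subseteq> V" "independent B2" "span B2 = V"
    and lf: "linear f" and fV: "f ` V \<subseteq> V"
  shows "(\<Sum>b\<in>B1. representation B1 (f b) b) = (\<Sum>c\<in>B2. representation B2 (f c) c)"
proof -
  have fin1: "finite B1" and fin2: "finite B2" using B1 B2 independent_bound by auto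
  have fcV: "f c \<in> span B1" if "c \<in> V" for c using that fV B1 by auto
  have fcV2: "f c \<in> span B2" if "c \<in> V" for c using that fV B2 by auto
  have "representation B1 (f b) b = (\<Sum>c\<in>B2. representation B2 b c * representation B1 (f c) b)"
    if b: "b \<in> B1" for b
  proof -
    have bs: "b \<in> span B2" using b B1 B2 by auto
    have "b = (\<Sum>c\<in>B2. representation B2 b c *\<^sub>R c)"
      using real_vector.sum_representation_eq[OF B2(2) bs fin2 order_refl] by simp
    then have "f b = f (\<Sum>c\<in>B2. representation B2 b c *\<^sub>R c)" by simp
    also have "\<dots> = (\<Sum>c\<in>B2. representation B2 b c *\<^sub>R f c)"
      by (simp add: lf linear_cmul real_vector.linear_sum)
    finally have fb: "f b = (\<Sum>c\<in>B2. representation B2 b c *\<^sub>R f c)" .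
    have "representation B1 (\<Sum>c\<in>B2. representation B2 b c *\<^sub>R f c) b
       = (\<Sum>c\<in>B2. representation B1 (representation B2 b c *\<^sub>R f c) b)"
    proof -
      have "\<And>i. i \<in> B2 \<Longrightarrow> representation B2 b i *\<^sub>R f i \<in> span B1"
        using fcV B2 by (auto intro!: real_vector.span_scale)
      from fun_cong[OF real_vector.representation_sum[OF B1(2), of B2 "\<lambda>c. representation B2 b c *\<^sub>R f c", OF this]]
      show ?thesis by simp
    qed
    also have "\<dots> = (\<Sum>c\<in>B2. representation B2 b c * representation B1 (f c) b)"
    proof (rule sum.cong[OF refl])
      fix c assume "c \<in> B2" then have "c \<in> V" using B2 by blast
      show "representation B1 (representation B2 b c *\<^sub>R f c) b = representation B2 b c * representation B1 (f c) b"
        using real_vector.representation_scale[OF B1(2) fcV[OF \<open>c \<in> V\<close>]] by simp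
    qed
    finally show ?thesis using fb by simp
  qed
  then have "(\<Sum>b\<in>B1. representation B1 (f b) b)
      = (\<Sum>b\<in>B1. \<Sum>c\<in>B2. representation B2 b c * representation B1 (f c) b)"
    by (rule sum.cong[OF refl])
  also have "\<dots> = (\<Sum>c\<in>B2. \<Sum>b\<in>B1. representation B1 (f c) b * representation B2 b c)"
    by (subst sum.swap) (simp add: mult.commute)
  also have "\<dots> = (\<Sum>c\<in>B2. representation B2 (f c) c)"
  proof (rule sum.cong[OF refl])
    fix c assume c: "c \<in> B2"
    have cV: "c \<in> V" using c B2 by auto
    have "f c = (\<Sum>b\<in>B1. representation B1 (f c) b *\<^sub>R b)"
      using real_vector.sum_representation_eq[OF B1(2) fcV[OF cV] fin1 order_refl] by simp
    then have "representation B2 (f c) c = representation B2 (\<Sum>b\<in>B1. representation B1 (f c) b *\<^sub>R b) c"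
      by simp
    also have "\<dots> = (\<Sum>b\<in>B1. representation B2 (representation B1 (f c) b *\<^sub>R b) c)"
    proof -
      have "\<And>i. i \<in> B1 \<Longrightarrow> representation B1 (f c) i *\<^sub>R i \<in> span B2"
        using B1 B2 by (auto intro!: real_vector.span_scale)
      from fun_cong[OF real_vector.representation_sum[OF B2(2), of B1 "\<lambda>b. representation B1 (f c) b *\<^sub>R b", OF this]]
      show ?thesis by simp
    qed
    also have "\<dots> = (\<Sum>b\<in>B1. representation B1 (f c) b * representation B2 b c)"
      using real_vector.representation_scale[OF B2(2)] B1 B2 by (auto simp: real_vector.span_base)
    finally show "(\<Sum>b\<in>B1. representation B1 (f c) b * representation B2 b c) = representation B2 (f c) c"
      by simp
  qed
  finally show ?thesis .
qed

lemma real_trace_basis: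
  fixes V :: "'v::euclidean_space set"
  assumes "subspace V" "B \<subseteq> V" "independent B" "span B = V" "linear f" "f ` V \<subseteq> V"
  shows "real_trace V f = (\<Sum>b\<in>B. representation B (f b) b)"
  using some_basis[OF assms(1)] trace_two_bases[OF _ _ _ assms(2-6)]
  unfolding real_trace_def Let_def by blast

lemma real_trace_add:
  fixes V :: "'v::euclidean_space set"
  assumes "subspace V" "f ` V \<subseteq> V" "g ` V \<subseteq> V"
  shows "real_trace V (\<lambda>v. f v + g v) = real_trace V f + real_trace V g"
proof -
  define B where "B \<equiv> SOME B. B \<subseteq> V \<and> \<not> dependent B \<and> span B = V"
  have B: "B \<subseteq> V \<and> independent B \<and> span B = V \<and> finite B"
    unfolding B_def by (rule some_basis[OF assms(1)])
  show ?thesis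
    unfolding real_trace_def Let_def B_def[symmetric]
  proof -
    have "\<forall>b\<in>B. representation B (f b + g b) b = representation B (f b) b + representation B (g b) b"
    proof
      fix b assume b: "b \<in> B"
      have bV: "b \<in> V" using b B by blast
      have "f b \<in> span B" "g b \<in> span B" using bV B assms(2,3) by blast+
      from real_vector.representation_add[OF _ this(2) this(1)] B
      show "representation B (f b + g b) b = representation B (f b) b + representation B (g b) b"
        by simp
    qed
    then show "(\<Sum>b\<in>B. representation B (f b + g b) b) = (\<Sum>b\<in>B. representation B (f b) b) + (\<Sum>b\<in>B. representation B (g b) b)"
      by (simp add: sum.distrib[symmetric])
  qed
qed

lemma real_trace_cong:
  fixes V :: "'v::euclidean_space set"
  assumes "subspace V" "\<And>v. v \<in> V \<Longrightarrow> f v = g v"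
  shows "real_trace V f = real_trace V g"
proof -
  define B where "B \<equiv> SOME B. B \<subseteq> V \<and> \<not> dependent B \<and> span B = V"
  have B: "B \<subseteq> V" using some_basis[OF assms(1)] unfolding B_def by blast
  show ?thesis unfolding real_trace_def Let_def B_def[symmetric]
    using assms(2) B by (intro sum.cong refl) auto
qed

lemma rep_transport:
  fixes g :: "'a::euclidean_space \<Rightarrow> 'b::euclidean_space"
  assumes lg: "linear g" and ig: "inj g" and B: "independent B" and v: "v \<in> span B" and b0: "b0 \<in> B"
  shows "representation (g ` B) (g v) (g b0) = representation B v b0"
proof -
  have fin: "finite B" using B independent_bound by blast
  have gB: "independent (g ` B)"
    using real_vector.linear_independent_injective_image[OF lg B] ig by (meson inj_on_subset subset_UNIV)
  have "v = (\<Sum>b\<in>B. representation B v b *\<^sub>R b)"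
    using real_vector.sum_representation_eq[OF B v fin order_refl] by simp
  then have "g v = g (\<Sum>b\<in>B. representation B v b *\<^sub>R b)" by simp
  also have "\<dots> = (\<Sum>b\<in>B. representation B v b *\<^sub>R g b)"
    by (simp add: lg linear_cmul real_vector.linear_sum)
  finally have gv: "g v = (\<Sum>b\<in>B. representation B v b *\<^sub>R g b)" .
  have "\<And>i. i \<in> B \<Longrightarrow> representation B v i *\<^sub>R g i \<in> span (g ` B)"
    by (simp add: real_vector.span_scale real_vector.span_base)
  from fun_cong[OF real_vector.representation_sum[OF gB, of B "\<lambda>b. representation B v b *\<^sub>R g b", OF this]]
  have "representation (g ` B) (g v) (g b0) = (\<Sum>b\<in>B. representation (g ` B) (representation B v b *\<^sub>R g b) (g b0))"
    by (simp add: gv)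
  also have "\<dots> = (\<Sum>b\<in>B. representation B v b * (if b = b0 then 1 else 0))"
  proof (rule sum.cong[OF refl])
    fix b assume b: "b \<in> B"
    have gbs: "g b \<in> span (g ` B)" using b by (auto intro: real_vector.span_base)
    show "representation (g ` B) (representation B v b *\<^sub>R g b) (g b0) = representation B v b * (if b = b0 then 1 else 0)"
      using real_vector.representation_scale[OF gB gbs] real_vector.representation_basis[OF gB imageI[OF b]]
        ig by (auto simp: inj_eq)
  qed
  also have "\<dots> = representation B v b0" using b0 fin
    by (simp add: if_distrib cong: if_cong)
  finally show ?thesis .
qed

lemma real_trace_transport:
  fixes g :: "'a::euclidean_space \<Rightarrow> 'b::euclidean_space"
  assumes lg: "linear g" and ig: "inj g" and lf: "linear f" and lA: "linear A"
    and Ag: "\<And>x. A (g x) = g (f x)"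
  shows "real_trace (range g) A = real_trace UNIV f"
proof -
  define B where "B \<equiv> SOME B. B \<subseteq> (UNIV::'a set) \<and> \<not> dependent B \<and> span B = UNIV"
  have B: "independent B" "span B = UNIV" "finite B"
    using some_basis[OF subspace_UNIV] unfolding B_def by auto
  have gB: "independent (g ` B)"
    using real_vector.linear_independent_injective_image[OF lg B(1)] ig by (meson inj_on_subset subset_UNIV)
  have sg: "span (g ` B) = range g" using span_linear_image[OF lg, of B] B(2) by simp
  have sub: "subspace (range g)" by (metis lg real_vector.subspace_span sg)
  have "real_trace (range g) A = (\<Sum>c\<in>g ` B. representation (g ` B) (A c) c)"
    by (rule real_trace_basis[OF sub _ gB sg lA]) (auto simp: Ag)
  also have "\<dots> = (\<Sum>b\<in>B. representation (g ` B) (g (f b)) (g b))"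
    by (subst sum.reindex) (auto simp: Ag intro: inj_on_subset[OF ig])
  also have "\<dots> = (\<Sum>b\<in>B. representation B (f b) b)"
    by (rule sum.cong[OF refl], rule rep_transport[OF lg ig B(1)]) (auto simp: B)
  also have "\<dots> = real_trace UNIV f"
    unfolding real_trace_def Let_def B_def by simp
  finally show ?thesis .
qed


lemma imul_imul[simp]: "imul (imul z) = - z"
  by (simp add: imul_def vec_eq_iff)

lemma linear_imul: "linear imul"
  by (rule linearI) (simp_all add: imul_def vec_eq_iff algebra_simps scaleR_conv_of_real)

lemma imul_add: "imul (x + y) = imul x + imul y" by (simp add: imul_def vec_eq_iff algebra_simps)
lemma imul_scaleR: "imul (r *\<^sub>R x) = r *\<^sub>R imul x" by (simp add: imul_def vec_eq_iff scaleR_conv_of_real)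
lemma imul_neg: "imul (- x) = - imul x" by (simp add: imul_def vec_eq_iff)
lemma imul_diff: "imul (x - y) = imul x - imul y" by (simp add: imul_def vec_eq_iff algebra_simps)
lemma imul_zero[simp]: "imul 0 = 0" by (simp add: imul_def vec_eq_iff)
lemma imul_eq_iff[simp]: "imul x = imul y \<longleftrightarrow> x = y" by (simp add: imul_def vec_eq_iff)
lemma inj_imul: "inj imul" by (simp add: inj_def)
lemma imul_eq_0_iff[simp]: "imul x = 0 \<longleftrightarrow> x = 0" by (simp add: imul_def vec_eq_iff)

lemma real_trace_double:
  fixes L :: "(complex^'n::finite) set"
  assumes subL: "subspace L" and spanL: "\<forall>z. \<exists>a\<in>L. \<exists>b\<in>L. z = a + imul b"
    and dir: "\<forall>a\<in>L. imul a \<in> L \<longrightarrow> a = 0"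
    and lA: "linear A" and AL: "A ` L \<subseteq> L" and Ai: "\<And>z. A (imul z) = imul (A z)"
  shows "real_trace UNIV A = 2 * real_trace L A \<and> real_trace UNIV (\<lambda>z. imul (A z)) = 0"
proof -
  define B where "B \<equiv> SOME B. B \<subseteq> L \<and> \<not> dependent B \<and> span B = L"
  have B: "B \<subseteq> L" "independent B" "span B = L" "finite B"
    using some_basis[OF subL] unfolding B_def by auto
  define B' where "B' = B \<union> imul ` B"
  have iB: "independent (imul ` B)"
    using real_vector.linear_independent_injective_image[OF linear_imul B(2)] inj_imul
    by (meson inj_on_subset subset_UNIV)
  have 0: "0 \<notin> B" using B(2) real_vector.dependent_zero by blast
  have disj: "B \<inter> imul ` B = {}"
  proof (rule ccontr)
    assume "B \<inter> imul ` B \<noteq> {}"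
    then obtain b c where "b \<in> B" "c \<in> B" "b = imul c" by auto
    then show False using dir B(1) 0 by auto
  qed
  have sim: "span (imul ` B) = imul ` L" using span_linear_image[OF linear_imul, of B] B(3) by simp
  have fin': "finite B'" using B(4) B'_def by simp
  have spanB': "span B' = UNIV"
  proof -
    { fix z :: "complex^'n"
      obtain a b where ab: "a \<in> L" "b \<in> L" "z = a + imul b" using spanL by blast
      have "a \<in> span B'" using ab B(3) real_vector.span_mono[of B B'] B'_def by auto
      moreover have "imul b \<in> span B'" using ab sim real_vector.span_mono[of "imul ` B" B'] B'_def by auto
      ultimately have "z \<in> span B'" using ab real_vector.span_add by blast }
    then show ?thesis by auto
  qed
  have indB': "independent B'"
    unfolding eucl.independent_explicit
  proof (intro conjI allI impI ballI)
    show "finite B'" by fact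
    fix c v assume sum0: "(\<Sum>v\<in>B'. c v *\<^sub>R v) = 0" and v: "v \<in> B'"
    define x where "x = (\<Sum>b\<in>B. c b *\<^sub>R b)"
    define y where "y = (\<Sum>b\<in>B. c (imul b) *\<^sub>R b)"
    have "(\<Sum>v\<in>B'. c v *\<^sub>R v) = x + (\<Sum>v\<in>imul ` B. c v *\<^sub>R v)"
      unfolding B'_def x_def using disj B(4) by (simp add: sum.union_disjoint)
    also have "(\<Sum>v\<in>imul ` B. c v *\<^sub>R v) = (\<Sum>b\<in>B. c (imul b) *\<^sub>R imul b)"
      by (simp add: sum.reindex inj_imul inj_on_subset[OF inj_imul])
    also have "\<dots> = imul y"
      unfolding y_def by (simp add: real_vector.linear_sum[OF linear_imul] imul_scaleR)
    finally have xy: "x + imul y = 0" using sum0 by simp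
    have "x \<in> span B" unfolding x_def
      by (intro real_vector.span_sum real_vector.span_scale real_vector.span_base)
    then have xL: "x \<in> L" using B(3) by simp
    have "y \<in> span B" unfolding y_def
      by (intro real_vector.span_sum real_vector.span_scale real_vector.span_base)
    then have yL: "y \<in> L" using B(3) by simp
    have "imul y = - x" using xy by (simp add: eq_neg_iff_add_eq_0 add.commute)
    then have "imul y \<in> L" using xL subL by (simp add: real_vector.subspace_neg)
    then have y0: "y = 0" using dir yL by blast
    then have x0: "x = 0" using xy by simp
    have c1: "\<forall>b\<in>B. c b = 0" using x0 B(2) B(4) unfolding x_def eucl.independent_explicit by blast
    have c2: "\<forall>b\<in>B. c (imul b) = 0"
    proof -
      have ind: "\<forall>c. (\<Sum>v\<in>B. c v *\<^sub>R v) = 0 \<longrightarrow> (\<forall>v\<in>B. c v = 0)"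
        using B(2) unfolding eucl.independent_explicit by blast
      show ?thesis using spec[OF ind, of "\<lambda>b. c (imul b)"] y0 unfolding y_def by simp
    qed
    show "c v = 0" using v c1 c2 unfolding B'_def by auto
  qed
  have AB: "A b \<in> L" if "b \<in> B" for b using that B(1) AL by blast
  have r1: "representation B' v = representation B v" if "v \<in> L" for v
    using real_vector.representation_extend[OF indB', of v B] that B B'_def by auto
  have r2: "representation B' (imul v) = representation (imul ` B) (imul v)" if "v \<in> L" for v
    using real_vector.representation_extend[OF indB', of "imul v" "imul ` B"] that B B'_def sim by auto
  have r0: "representation B v c = 0" if "c \<notin> B" for v c
    using that real_vector.representation_ne_zero by blast
  have r0': "representation (imul ` B) v c = 0" if "c \<notin> imul ` B" for v c
    using that real_vector.representation_ne_zero by blast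
  have rt: "representation (imul ` B) (imul v) (imul b) = representation B v b" if "v \<in> L" "b \<in> B" for v b
    using rep_transport[OF linear_imul inj_imul B(2)] that B by auto
  have nB: "imul b \<notin> B" if "b \<in> B" for b using that disj by auto
  have nB': "b \<notin> imul ` B" if "b \<in> B" for b using that disj by auto
  have sub': "(\<Sum>c\<in>B'. h c) = (\<Sum>b\<in>B. h b) + (\<Sum>b\<in>B. h (imul b))" for h :: "_ \<Rightarrow> real"
    unfolding B'_def using disj B(4) by (simp add: sum.union_disjoint sum.reindex inj_on_subset[OF inj_imul])
  have t1: "real_trace UNIV A = (\<Sum>c\<in>B'. representation B' (A c) c)"
    by (rule real_trace_basis[OF subspace_UNIV _ indB' spanB' lA]) auto
  have lA': "linear (\<lambda>z. imul (A z))" using linear_compose[OF lA linear_imul] by (simp add: o_def)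
  have t2: "real_trace UNIV (\<lambda>z. imul (A z)) = (\<Sum>c\<in>B'. representation B' (imul (A c)) c)"
    by (rule real_trace_basis[OF subspace_UNIV _ indB' spanB' lA']) auto
  have t3: "real_trace L A = (\<Sum>b\<in>B. representation B (A b) b)"
    by (rule real_trace_basis[OF subL B(1) B(2) B(3) lA AL])
  have "real_trace UNIV A = 2 * real_trace L A"
    unfolding t1 t3 sub' using AB r1 r2 rt by (simp add: Ai)
  moreover have "real_trace UNIV (\<lambda>z. imul (A z)) = 0"
  proof -
    have "(\<Sum>b\<in>B. representation B' (imul (A b)) b) = 0"
      using AB r2 r0' nB' by (simp add: sum.neutral)
    moreover have "(\<Sum>b\<in>B. representation B' (imul (A (imul b))) (imul b)) = 0"
    proof (rule sum.neutral, rule ballI)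
      fix b assume b: "b \<in> B"
      have "- A b \<in> L" using AB[OF b] subL by (simp add: real_vector.subspace_neg)
      then show "representation B' (imul (A (imul b))) (imul b) = 0"
        using r1 r0 nB[OF b] by (simp add: Ai)
    qed
    ultimately show ?thesis unfolding t2 sub' by simp
  qed
  ultimately show ?thesis by blast
qed


section \<open>Brackets\<close>

lemma br_add_left: "br K (x + y) z = br K x z + br K y z"
  by (simp add: br_def vec_eq_iff algebra_simps sum.distrib)
lemma br_add_right: "br K z (x + y) = br K z x + br K z y"
  by (simp add: br_def vec_eq_iff algebra_simps sum.distrib)
lemma br_neg_left: "br K (- x) z = - br K x z"
  by (simp add: br_def vec_eq_iff sum_negf)
lemma br_neg_right: "br K z (- x) = - br K z x"
  by (simp add: br_def vec_eq_iff sum_negf)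
lemma br_diff_left: "br K (x - y) z = br K x z - br K y z"
  by (simp add: br_def vec_eq_iff algebra_simps sum_subtractf)
lemma br_diff_right: "br K z (x - y) = br K z x - br K z y"
  by (simp add: br_def vec_eq_iff algebra_simps sum_subtractf)
lemma br_scaleR_left: "br K (r *\<^sub>R x) z = r *\<^sub>R br K x z"
  for K :: "'i::finite \<Rightarrow> 'i \<Rightarrow> 'i \<Rightarrow> 'a::{real_algebra_1, comm_ring_1}"
  by (simp add: br_def vec_eq_iff scaleR_sum_right)
lemma br_scaleR_right: "br K z (r *\<^sub>R x) = r *\<^sub>R br K z x"
  for K :: "'i::finite \<Rightarrow> 'i \<Rightarrow> 'i \<Rightarrow> 'a::{real_algebra_1, comm_ring_1}"
  by (simp add: br_def vec_eq_iff scaleR_sum_right)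
lemma linear_br: "linear (br K z)"
  for K :: "'i::finite \<Rightarrow> 'i \<Rightarrow> 'i \<Rightarrow> 'a::{real_algebra_1, comm_ring_1}"
  by (rule linearI) (simp_all add: br_add_right br_scaleR_right)
lemma br_zero_left[simp]: "br K 0 z = 0" by (simp add: br_def vec_eq_iff)
lemma br_zero_right[simp]: "br K z 0 = 0" by (simp add: br_def vec_eq_iff)

lemma br_imul_left: "br K (imul x) z = imul (br K x z)"
  by (simp add: br_def imul_def vec_eq_iff sum_distrib_left algebra_simps)
lemma br_imul_right: "br K z (imul x) = imul (br K z x)"
  by (simp add: br_def imul_def vec_eq_iff sum_distrib_left algebra_simps)

lemma emb_br: "emb (br C x y) = br (cC C) (emb x) (emb y)"
  by (simp add: br_def emb_def cC_def vec_eq_iff)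

lemma emb_scaleR: "emb (r *\<^sub>R x) = r *\<^sub>R emb x"
proof -
  have "(emb (r *\<^sub>R x)) $ k = (r *\<^sub>R emb x) $ k" for k
  proof -
    have "(emb (r *\<^sub>R x)) $ k = complex_of_real (r * x $ k)" by (simp add: emb_def)
    also have "\<dots> = r *\<^sub>R complex_of_real (x $ k)" by (simp add: scaleR_conv_of_real)
    also have "\<dots> = (r *\<^sub>R emb x) $ k" by (simp add: emb_def)
    finally show ?thesis .
  qed
  then show ?thesis by (simp add: vec_eq_iff)
qed

lemma linear_emb: "linear emb"
  by (rule linearI) (simp_all add: emb_scaleR, simp add: emb_def vec_eq_iff)
lemma emb_eq_iff[simp]: "emb x = emb y \<longleftrightarrow> x = y" by (simp add: emb_def vec_eq_iff)
lemma inj_emb: "inj emb" by (simp add: inj_def)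
lemma emb_add: "emb (x + y) = emb x + emb y" by (simp add: emb_def vec_eq_iff)
lemma emb_zero[simp]: "emb 0 = 0" by (simp add: emb_def vec_eq_iff)

lemma sum_pair_UNIV: "(\<Sum>a\<in>(UNIV::('s::finite \<times> 'i::finite) set). f a) = (\<Sum>\<alpha>\<in>UNIV. \<Sum>i\<in>UNIV. f (\<alpha>, i))"
  by (simp only: sum.cartesian_product) simp

lemma comp_br_gen:
  fixes K :: "'i::finite \<Rightarrow> 'i \<Rightarrow> 'i \<Rightarrow> 'a::comm_ring_1"
    and E :: "('s::{finite,ab_semigroup_mult} \<times> 'i) \<Rightarrow> ('s \<times> 'i) \<Rightarrow> ('s \<times> 'i) \<Rightarrow> 'a"
  assumes E: "\<And>a b c. E a b c = (if fst a * fst b = fst c then 1 else 0) * K (snd a) (snd b) (snd c)"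
  shows "comp (br E x y) \<gamma> = (\<Sum>\<alpha>\<in>UNIV. \<Sum>\<beta>\<in>UNIV. if \<alpha> * \<beta> = \<gamma> then br K (comp x \<alpha>) (comp y \<beta>) else 0)"
proof -
  { fix k
    have "(br E x y) $ (\<gamma>, k) = (\<Sum>\<alpha>\<in>UNIV. \<Sum>i\<in>UNIV. \<Sum>\<beta>\<in>UNIV. \<Sum>j\<in>UNIV.
        x $ (\<alpha>, i) * y $ (\<beta>, j) * ((if \<alpha> * \<beta> = \<gamma> then 1 else 0) * K i j k))"
      by (simp add: br_def sum_pair_UNIV E)
    also have "\<dots> = (\<Sum>\<alpha>\<in>UNIV. \<Sum>\<beta>\<in>UNIV. \<Sum>i\<in>UNIV. \<Sum>j\<in>UNIV.
        x $ (\<alpha>, i) * y $ (\<beta>, j) * ((if \<alpha> * \<beta> = \<gamma> then 1 else 0) * K i j k))"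
      by (rule sum.cong[OF refl], rule sum.swap)
    also have "\<dots> = (\<Sum>\<alpha>\<in>UNIV. \<Sum>\<beta>\<in>UNIV. (if \<alpha> * \<beta> = \<gamma> then br K (comp x \<alpha>) (comp y \<beta>) else 0) $ k)"
      apply (intro sum.cong refl)
      subgoal for \<alpha> \<beta> by (cases "\<alpha> * \<beta> = \<gamma>") (simp_all add: br_def Defs.comp_def)
      done
    finally have "(br E x y) $ (\<gamma>, k) = (\<Sum>\<alpha>\<in>UNIV. \<Sum>\<beta>\<in>UNIV. if \<alpha> * \<beta> = \<gamma> then br K (comp x \<alpha>) (comp y \<beta>) else 0) $ k"
      by (simp add: sum_component) }
  then show ?thesis by (simp add: Defs.comp_def vec_eq_iff)
qed

lemma comp_br_real: "comp (br (expC C) x y) \<gamma> = (\<Sum>\<alpha>\<in>UNIV. \<Sum>\<beta>\<in>UNIV. if \<alpha> * \<beta> = \<gamma> then br C (comp x \<alpha>) (comp y \<beta>) else 0)"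
  by (rule comp_br_gen) (simp add: expC_def selector_def)

lemma comp_br_cplx: "comp (br (cC (expC C)) x y) \<gamma> = (\<Sum>\<alpha>\<in>UNIV. \<Sum>\<beta>\<in>UNIV. if \<alpha> * \<beta> = \<gamma> then br (cC C) (comp x \<alpha>) (comp y \<beta>) else 0)"
  by (rule comp_br_gen) (simp add: expC_def selector_def cC_def)


section \<open>Components\<close>

lemma comp_nth: "comp x \<alpha> $ i = x $ (\<alpha>, i)" by (simp add: Defs.comp_def)
lemma comp_ext: "(\<And>\<alpha>. comp x \<alpha> = comp y \<alpha>) \<Longrightarrow> x = y"
  by (metis comp_nth prod.collapse vec_eq_iff)
lemma comp_add: "comp (x + y) \<alpha> = comp x \<alpha> + comp y \<alpha>" by (simp add: Defs.comp_def vec_eq_iff)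
lemma comp_diff: "comp (x - y) \<alpha> = comp x \<alpha> - comp y \<alpha>" by (simp add: Defs.comp_def vec_eq_iff)
lemma comp_neg: "comp (- x) \<alpha> = - comp x \<alpha>" by (simp add: Defs.comp_def vec_eq_iff)
lemma comp_scaleR: "comp (r *\<^sub>R x) \<alpha> = r *\<^sub>R comp x \<alpha>" by (simp add: Defs.comp_def vec_eq_iff)
lemma comp_zero: "comp 0 \<alpha> = 0" by (simp add: Defs.comp_def vec_eq_iff)
lemma comp_emb: "comp (emb x) \<alpha> = emb (comp x \<alpha>)" by (simp add: Defs.comp_def emb_def vec_eq_iff)
lemma comp_imul: "comp (imul x) \<alpha> = imul (comp x \<alpha>)" by (simp add: Defs.comp_def imul_def vec_eq_iff)
lemma comp_conjv: "comp (conjv x) \<alpha> = conjv (comp x \<alpha>)" by (simp add: Defs.comp_def conjv_def vec_eq_iff)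

definition mk :: "('s::finite \<Rightarrow> 'a^'i::finite) \<Rightarrow> 'a^('s \<times> 'i)" where
  "mk f = (\<chi> p. f (fst p) $ snd p)"
lemma comp_mk: "comp (mk f) \<alpha> = f \<alpha>" by (simp add: Defs.comp_def mk_def vec_eq_iff)

lemma sexp_iff: "x \<in> sexp W \<longleftrightarrow> (\<forall>\<alpha>. comp x \<alpha> \<in> W)" by (simp add: sexp_def)

lemma subspace_sexp:
  fixes W :: "('a::real_vector^'i::finite) set"
  assumes "subspace W"
  shows "subspace (sexp W :: ('a^('s::finite \<times> 'i)) set)"
  using assms unfolding subspace_def
  by (auto simp: sexp_iff comp_add comp_scaleR comp_zero)

lemma sexp_closed:
  fixes W :: "('a::real_vector^'i::finite) set"
    and B :: "'a^('s::{finite,ab_semigroup_mult} \<times> 'i) \<Rightarrow> _ \<Rightarrow> _"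
  assumes W: "subspace W" and bW: "\<forall>x\<in>W. \<forall>y\<in>W. b x y \<in> W"
    and Bc: "\<And>x y \<gamma>. comp (B x y) \<gamma> = (\<Sum>\<alpha>\<in>UNIV. \<Sum>\<beta>\<in>UNIV. if \<alpha> * \<beta> = \<gamma> then b (comp x \<alpha>) (comp y \<beta>) else 0)"
    and x: "x \<in> sexp W" and y: "y \<in> sexp W"
  shows "B x y \<in> sexp W"
  unfolding sexp_iff Bc
proof
  fix \<gamma>
  show "(\<Sum>\<alpha>\<in>UNIV. \<Sum>\<beta>\<in>UNIV. if \<alpha> * \<beta> = \<gamma> then b (comp x \<alpha>) (comp y \<beta>) else 0) \<in> W"
    using x y bW W unfolding sexp_iff
    by (intro real_vector.subspace_sum[OF W] ballI) (auto intro: real_vector.subspace_0)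
qed

lemma sexp_lift:
  fixes W :: "('a::real_vector^'i::finite) set"
  assumes "\<forall>w. \<exists>a\<in>W. \<exists>b\<in>W. w = h a b"
    and h: "\<And>x y \<alpha>. comp (H x y) \<alpha> = h (comp x \<alpha>) (comp y \<alpha>)"
  shows "\<exists>a\<in>(sexp W :: ('a^('s::finite \<times> 'i)) set). \<exists>b\<in>sexp W. z = H a b"
proof -
  obtain fa fb where f: "\<And>w. fa w \<in> W \<and> fb w \<in> W \<and> w = h (fa w) (fb w)"
    using assms(1) by metis
  have f3: "w = h (fa w) (fb w)" for w using f by blast
  define A where "A = mk (\<lambda>\<alpha>. fa (comp z \<alpha>))"
  define B where "B = mk (\<lambda>\<alpha>. fb (comp z \<alpha>))"
  have "A \<in> sexp W" "B \<in> sexp W" unfolding A_def B_def sexp_iff comp_mk using f by auto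
  moreover have "z = H A B"
    by (rule comp_ext) (simp add: h A_def B_def comp_mk, rule f3)
  ultimately show ?thesis by blast
qed

section \<open>Real and imaginary parts\<close>

definition re :: "complex^'i::finite \<Rightarrow> real^'i" where "re z = (\<chi> k. Re (z $ k))"
definition im :: "complex^'i::finite \<Rightarrow> real^'i" where "im z = (\<chi> k. Im (z $ k))"

lemma re_im: "z = emb (re z) + imul (emb (im z))"
  by (simp add: vec_eq_iff emb_def imul_def re_def im_def complex_eq_iff)
lemma conjv_re_im: "conjv z = emb (re z) - imul (emb (im z))"
  by (simp add: vec_eq_iff emb_def imul_def re_def im_def conjv_def complex_eq_iff)
lemma imul_emb_in_range: "imul (emb a) = emb b \<Longrightarrow> a = 0"
  by (simp add: vec_eq_iff emb_def imul_def complex_eq_iff)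

lemma real_trace_zero:
  fixes V :: "'v::euclidean_space set"
  shows "real_trace V (\<lambda>_. 0) = 0"
  by (simp add: real_trace_def Let_def real_vector.representation_zero)


lemma subspace_range_emb: "subspace (range emb)"
proof -
  have "span (range emb) = range emb"
    using span_linear_image[OF linear_emb, of UNIV] by (simp add: real_vector.span_UNIV)
  then show ?thesis by (metis real_vector.subspace_span)
qed

lemma semisimple_of_compact_form:
  fixes D :: "'j::finite \<Rightarrow> 'j \<Rightarrow> 'j \<Rightarrow> real" and L :: "(complex^'j) set"
  assumes subL: "subspace L" and spanL: "\<forall>z. \<exists>a\<in>L. \<exists>b\<in>L. z = a + imul b"
    and dir: "\<forall>a\<in>L. imul a \<in> L \<longrightarrow> a = 0"
    and clos: "\<forall>x\<in>L. \<forall>y\<in>L. br (cC D) x y \<in> L" and cpt: "compact_real_lie L (br (cC D))"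
  shows "semisimple_real D"
  unfolding semisimple_real_def
proof (intro allI impI)
  let ?b = "br (cC D)"
  define Ad where "Ad z w = (\<lambda>u. ?b z (?b w u))" for z w
  define Q where "Q z w = real_trace UNIV (Ad z w)" for z w
  have linAd: "linear (Ad z w)" for z w
    unfolding Ad_def using linear_compose[OF linear_br linear_br] by (simp add: o_def)
  have Adi: "Ad z w (imul u) = imul (Ad z w u)" for z w u
    by (simp add: Ad_def br_imul_right)
  have Q_add: "Q z (w1 + w2) = Q z w1 + Q z w2" for z w1 w2
  proof -
    have "Ad z (w1 + w2) = (\<lambda>u. Ad z w1 u + Ad z w2 u)"
      by (simp add: Ad_def br_add_left br_add_right)
    then show ?thesis unfolding Q_def by (simp add: real_trace_add)
  qed
  fix x :: "real^'j"
  assume kx: "\<forall>y. killing UNIV (br D) x y = 0"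
  have spanE: "\<forall>z. \<exists>a\<in>range emb. \<exists>b\<in>range emb. z = a + imul b"
    using re_im by blast
  have dirE: "\<forall>a\<in>range emb. imul a \<in> range emb \<longrightarrow> a = 0"
    using imul_emb_in_range by fastforce
  have Q1: "Q (emb x) (emb y) = 0" for y
  proof -
    let ?A = "Ad (emb x) (emb y)"
    have AE: "?A (emb u) = emb (br D x (br D y u))" for u by (simp add: Ad_def emb_br)
    have "killing UNIV (br D) x y = real_trace (range emb) ?A"
      unfolding killing_def
      by (rule real_trace_transport[OF linear_emb inj_emb _ linAd, symmetric])
         (simp_all add: AE linear_compose[OF linear_br linear_br, unfolded o_def])
    moreover have "Q (emb x) (emb y) = 2 * real_trace (range emb) ?A"
      unfolding Q_def
      using real_trace_double[OF subspace_range_emb spanE dirE linAd _ Adi] AE by blast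
    ultimately show ?thesis using kx by simp
  qed
  have Q2: "Q (emb x) (imul (emb y)) = 0" for y
  proof -
    have "Ad (emb x) (imul (emb y)) = (\<lambda>u. imul (Ad (emb x) (emb y) u))"
      by (simp add: Ad_def br_imul_left br_imul_right)
    moreover have "real_trace UNIV (\<lambda>u. imul (Ad (emb x) (emb y) u)) = 0"
    proof -
      have "Ad (emb x) (emb y) ` range emb \<subseteq> range emb"
        by (auto simp: Ad_def emb_br[symmetric])
      from real_trace_double[OF subspace_range_emb spanE dirE linAd this Adi] show ?thesis by blast
    qed
    ultimately show ?thesis unfolding Q_def by simp
  qed
  have Q0: "Q (emb x) w = 0" for w
  proof -
    have "Q (emb x) w = Q (emb x) (emb (re w) + imul (emb (im w)))"
      using re_im[of w] by (rule arg_cong)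
    also have "\<dots> = 0" by (simp add: Q_add Q1 Q2)
    finally show ?thesis .
  qed
  obtain a b where ab: "a \<in> L" "b \<in> L" "emb x = a + imul b" using spanL by blast
  have AdL: "Ad z w ` L \<subseteq> L" if "z \<in> L" "w \<in> L" for z w
    using that clos by (auto simp: Ad_def)
  have trL: "real_trace UNIV (Ad z z) = 2 * killing L ?b z z" if "z \<in> L" for z
    using real_trace_double[OF subL spanL dir linAd AdL[OF that that] Adi]
    by (simp add: killing_def Ad_def)
  define M where "M u = Ad b a u - Ad a b u" for u
  have linM: "linear M" unfolding M_def using linear_compose_sub[OF linAd linAd] by simp
  have MsubL: "M ` L \<subseteq> L" using AdL ab subL by (auto simp: M_def intro!: real_vector.subspace_diff)
  have Mi: "M (imul u) = imul (M u)" for u by (simp add: M_def Adi imul_diff)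
  have trM: "real_trace UNIV (\<lambda>u. imul (M u)) = 0"
    using real_trace_double[OF subL spanL dir linM MsubL Mi] by blast
  have expand: "Ad (a + imul b) (a - imul b) = (\<lambda>u. (Ad a a u + Ad b b u) + imul (M u))"
    by (rule ext) (simp add: Ad_def M_def br_add_left br_diff_right br_imul_left br_imul_right
        br_add_right br_diff_left imul_diff imul_add algebra_simps)
  have "0 = Q (emb x) (a - imul b)" using Q0 by simp
  also have "\<dots> = real_trace UNIV (\<lambda>u. Ad a a u + Ad b b u) + real_trace UNIV (\<lambda>u. imul (M u))"
    unfolding Q_def ab(3) expand by (rule real_trace_add) auto
  also have "\<dots> = real_trace UNIV (Ad a a) + real_trace UNIV (Ad b b)"
    using trM by (simp add: real_trace_add)
  also have "\<dots> = 2 * killing L ?b a a + 2 * killing L ?b b b"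
    using trL ab by simp
  finally have sum0: "killing L ?b a a + killing L ?b b b = 0" by simp
  have k0: "killing L ?b 0 0 = 0" by (simp add: killing_def real_trace_zero)
  have ka: "killing L ?b a a \<le> 0" using cpt ab k0 unfolding compact_real_lie_def
    by (cases "a = 0") (auto intro: less_imp_le)
  have kb: "killing L ?b b b \<le> 0" using cpt ab k0 unfolding compact_real_lie_def
    by (cases "b = 0") (auto intro: less_imp_le)
  have "a = 0" using cpt ab sum0 kb unfolding compact_real_lie_def by (metis add_neg_nonpos less_irrefl)
  moreover have "b = 0" using cpt ab sum0 ka unfolding compact_real_lie_def by (metis add_nonpos_neg less_irrefl)
  ultimately have "emb x = 0" using ab by simp
  then show "x = 0" using emb_eq_iff[of x 0] by simp
qed


theorem theorem5:
  fixes C :: "'i::finite \<Rightarrow> 'i \<Rightarrow> 'i \<Rightarrow> real"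
    and T0 P0 :: "(real^'i) set"
  assumes lie: "lie_constants C"
    and cartan: "cartan_decomposition C T0 P0"
    and compact: "compact_real_lie
                    (sexp {emb t + imul (emb p) | t p. t \<in> T0 \<and> p \<in> P0}
                       :: (complex^('s::{finite, ab_semigroup_mult} \<times> 'i)) set)
                    (br (cC (expC C :: ('s \<times> 'i) \<Rightarrow> _)))"
  shows "cartan_decomposition (expC C :: ('s \<times> 'i) \<Rightarrow> _)
           (sexp T0) (sexp P0)"
proof -
  from cartan obtain Lk where
    subT: "real_subalgebra UNIV (br C) T0" and
    dec: "\<forall>x. \<exists>t\<in>T0. \<exists>p\<in>P0. x = t + p" and
    crf: "compact_real_form C Lk" and cj: "conjv ` Lk \<subseteq> Lk" and
    eT: "emb ` T0 = range emb \<inter> Lk" and eP: "emb ` P0 = range emb \<inter> imul ` Lk"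
    using cartan unfolding cartan_decomposition_def
    apply (elim conjE exE)
    apply (rule that)
         apply assumption+
    done
  have rf: "real_form C Lk" using crf by (simp add: compact_real_form_def)
  have subLk: "subspace Lk" and closLk: "\<forall>x\<in>Lk. \<forall>y\<in>Lk. br (cC C) x y \<in> Lk"
    and spanLk: "\<forall>z. \<exists>a\<in>Lk. \<exists>b\<in>Lk. z = a + imul b" and dirLk: "\<forall>a\<in>Lk. imul a \<in> Lk \<longrightarrow> a = 0"
    using rf by (auto simp: real_form_def real_subalgebra_def)
  have subT0: "subspace T0" and closT0: "\<forall>x\<in>T0. \<forall>y\<in>T0. br C x y \<in> T0"
    using subT by (auto simp: real_subalgebra_def)
  have Gk: "{emb t + imul (emb p) | t p. t \<in> T0 \<and> p \<in> P0} = Lk"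
  proof (intro equalityI subsetI)
    fix z assume "z \<in> {emb t + imul (emb p) | t p. t \<in> T0 \<and> p \<in> P0}"
    then obtain t p where tp: "t \<in> T0" "p \<in> P0" "z = emb t + imul (emb p)" by blast
    have "emb t \<in> Lk" using eT tp by blast
    moreover obtain w where w: "w \<in> Lk" "emb p = imul w" using eP tp by blast
    ultimately show "z \<in> Lk" using tp subLk
      by (simp add: real_vector.subspace_diff)
  next
    fix z assume z: "z \<in> Lk"
    have cz: "conjv z \<in> Lk" using cj z by blast
    have e1: "z + conjv z = 2 *\<^sub>R emb (re z)"
      by (subst (1) re_im, simp add: conjv_re_im scaleR_2)
    have e2: "z - conjv z = 2 *\<^sub>R imul (emb (im z))"
      by (subst (1) re_im, simp add: conjv_re_im scaleR_2)
    have "emb (re z) = (1/2) *\<^sub>R (z + conjv z)" by (simp add: e1)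
    then have r: "emb (re z) \<in> Lk" using subLk z cz
      by (simp add: real_vector.subspace_add real_vector.subspace_scale)
    have "imul (emb (im z)) = (1/2) *\<^sub>R (z - conjv z)" by (simp add: e2)
    then have i: "imul (emb (im z)) \<in> Lk" using subLk z cz
      by (simp add: real_vector.subspace_diff real_vector.subspace_scale)
    have "re z \<in> T0" using r eT by (metis IntI emb_eq_iff imageE rangeI)
    moreover have "emb (im z) = imul (- imul (emb (im z)))" by (simp add: imul_neg)
    then have "emb (im z) \<in> emb ` P0" unfolding eP
      using i subLk by (auto intro!: imageI real_vector.subspace_neg)
    then have "im z \<in> P0" by (auto simp: inj_emb)
    ultimately show "z \<in> {emb t + imul (emb p) | t p. t \<in> T0 \<and> p \<in> P0}"
      using re_im[of z] by blast
  qed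
  let ?L = "sexp Lk :: (complex^('s \<times> 'i)) set"
  let ?D = "expC C :: ('s \<times> 'i) \<Rightarrow> _"
  have subL: "subspace ?L" by (rule subspace_sexp[OF subLk])
  have closL: "\<forall>x\<in>?L. \<forall>y\<in>?L. br (cC ?D) x y \<in> ?L"
    using sexp_closed[OF subLk closLk comp_br_cplx] by blast
  have spanL: "\<forall>z. \<exists>a\<in>?L. \<exists>b\<in>?L. z = a + imul b"
  proof
    fix z :: "complex^('s \<times> 'i)"
    show "\<exists>a\<in>?L. \<exists>b\<in>?L. z = a + imul b"
      by (rule sexp_lift[OF spanLk]) (simp add: comp_add comp_imul)
  qed
  have dirL: "\<forall>a\<in>?L. imul a \<in> ?L \<longrightarrow> a = 0"
  proof (intro ballI impI)
    fix a assume a: "a \<in> ?L" "imul a \<in> ?L"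
    show "a = 0" by (rule comp_ext) (use a dirLk in \<open>auto simp: sexp_iff comp_imul comp_zero\<close>)
  qed
  have cptL: "compact_real_lie ?L (br (cC ?D))" using compact unfolding Gk .
  have ss: "semisimple_real ?D"
    by (rule semisimple_of_compact_form[OF subL spanL dirL closL cptL])
  have sa: "real_subalgebra UNIV (br ?D) (sexp T0)"
    unfolding real_subalgebra_def
    using subspace_sexp[OF subT0] sexp_closed[OF subT0 closT0 comp_br_real] by blast
  have dc: "\<forall>x::real^('s \<times> 'i). \<exists>t\<in>sexp T0. \<exists>p\<in>sexp P0. x = t + p"
  proof
    fix x :: "real^('s \<times> 'i)"
    obtain ft fp where f: "\<And>y. ft y \<in> T0" "\<And>y. fp y \<in> P0" "\<And>y. y = ft y + fp y"
      using dec by metis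
    define t where "t = mk (\<lambda>\<alpha>. ft (comp x \<alpha>))"
    define p where "p = mk (\<lambda>\<alpha>. fp (comp x \<alpha>))"
    have "t \<in> sexp T0" "p \<in> sexp P0" unfolding t_def p_def sexp_iff comp_mk using f by auto
    moreover have "x = t + p"
      by (rule comp_ext) (simp add: t_def p_def comp_mk comp_add f(3)[symmetric])
    ultimately show "\<exists>t\<in>sexp T0. \<exists>p\<in>sexp P0. x = t + p" by blast
  qed
  have crfL: "compact_real_form ?D ?L"
    unfolding compact_real_form_def real_form_def real_subalgebra_def
    using subL closL spanL dirL cptL by blast
  have cjL: "conjv ` ?L \<subseteq> ?L"
    using cj by (auto simp: sexp_iff comp_conjv image_subset_iff)
  let ?T = "sexp T0 :: (real^('s \<times> 'i)) set"
  let ?P = "sexp P0 :: (real^('s \<times> 'i)) set"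
  have eTL: "emb ` ?T = range emb \<inter> ?L"
  proof (intro equalityI subsetI)
    fix z assume "z \<in> emb ` ?T"
    then obtain x where x: "x \<in> ?T" "z = emb x" by blast
    have "comp z \<alpha> \<in> Lk" for \<alpha> using x eT by (auto simp: sexp_iff comp_emb)
    then show "z \<in> range emb \<inter> ?L" using x by (auto simp: sexp_iff)
  next
    fix z assume "z \<in> range emb \<inter> ?L"
    then obtain x where x: "z = emb x" "\<forall>\<alpha>. emb (comp x \<alpha>) \<in> Lk" by (auto simp: sexp_iff comp_emb)
    have "comp x \<alpha> \<in> T0" for \<alpha>
    proof -
      have "emb (comp x \<alpha>) \<in> emb ` T0" using x eT by blast
      then show ?thesis by (auto simp: inj_emb)
    qed
    then show "z \<in> emb ` ?T" using x by (auto simp: sexp_iff)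
  qed
  have ePL: "emb ` ?P = range emb \<inter> imul ` ?L"
  proof (intro equalityI subsetI)
    fix z assume "z \<in> emb ` ?P"
    then obtain x where x: "x \<in> ?P" "z = emb x" by blast
    define y where "y = - imul (emb x)"
    have zy: "z = imul y" using x by (simp add: y_def imul_neg)
    have "comp y \<alpha> \<in> Lk" for \<alpha>
    proof -
      have "emb (comp x \<alpha>) \<in> imul ` Lk" using x eP by (auto simp: sexp_iff)
      then obtain w where w: "w \<in> Lk" "emb (comp x \<alpha>) = imul w" by blast
      have "comp y \<alpha> = w" by (simp add: y_def comp_neg comp_imul comp_emb w)
      then show ?thesis using w by simp
    qed
    then have "y \<in> ?L" by (simp add: sexp_iff)
    then show "z \<in> range emb \<inter> imul ` ?L" using x zy by blast
  next
    fix z assume "z \<in> range emb \<inter> imul ` ?L"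
    then obtain x y where xy: "z = emb x" "z = imul y" "y \<in> ?L" by blast
    have "comp x \<alpha> \<in> P0" for \<alpha>
    proof -
      have "emb (comp x \<alpha>) = imul (comp y \<alpha>)" using xy by (metis comp_emb comp_imul)
      moreover have "comp y \<alpha> \<in> Lk" using xy by (simp add: sexp_iff)
      ultimately have "emb (comp x \<alpha>) \<in> emb ` P0" unfolding eP by blast
      then show ?thesis by (auto simp: inj_emb)
    qed
    then show "z \<in> emb ` ?P" using xy by (auto simp: sexp_iff)
  qed
  show ?thesis
    unfolding cartan_decomposition_def
    using ss sa dc crfL cjL eTL ePL by blast
qed

end
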